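(* Let $\mathcal{X},\mathcal{Y}$ be finite sets, $P$ a joint probability mass function on $\mathcal{X}\times\mathcal{Y}$ with $P(x,y)>0$ for all $(x,y)$, and $q\in\mathbb{R}$. Let $G^\ast$ be a conditional guessing function that is optimal under $q$-non-extensivity, i.e. for every $y\in\mathcal{Y}$ and $x,x'\in\mathcal{X}$, $G^\ast(x|y)<G^\ast(x'|y)$ implies $P_q(x|y)\ge P_q(x'|y)$. Then for every $\rho>0$, $$ E_q[G^\ast(X|Y)^\rho]\;\leq\;\sum_{y\in\mathcal{Y}}P_q(\cdot,y)\left[\sum_{x\in\mathcal{X}}P_q(x|y)^{\frac{1}{1+\rho}}\right]^{1+\rho} =\frac{\sum_{y\in\mathcal{Y}}\left[\sum_{x\in\mathcal{X}}P(x,y)^{\frac{q}{1+\rho}}\right]^{1+\rho}}{\sum_{y\in\mathcal{Y}}\sum_{x\in\mathcal{X}}P(x,y)^q}. $$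
   Context: A conditional guessing function is a map $G(\cdot|\cdot)$ on $\mathcal{X}\times\mathcal{Y}$ such that for each $y$, $x\mapsto G(x|y)$ is a bijection from $\mathcal{X}$ onto $\{1,\dots,|\mathcal{X}|\}$. The $q$-normalized expectation under $P$ is $E_q[F(X,Y)]=\frac{\sum_{x,y}F(x,y)P(x,y)^q}{\sum_{x,y}P(x,y)^q}$. Escort distributions: $P(x|y)=P(x,y)/\sum_{x'}P(x',y)$; $P_q(x|y)=\frac{P(x|y)^q}{\sum_{x'\in\mathcal{X}}P(x'|y)^q}$; $P_q(\cdot,y)=\frac{\sum_{x\in\mathcal{X}}P(x,y)^q}{\sum_{x'\in\mathcal{X},y'\in\mathcal{Y}}P(x',y')^q}$. *)

theory Defs
  imports "HOL-Analysis.Analysis"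
begin

definition cond_guessing :: "('x::finite \<Rightarrow> 'y \<Rightarrow> nat) \<Rightarrow> bool" where
  "cond_guessing G \<longleftrightarrow> (\<forall>y. bij_betw (\<lambda>x. G x y) UNIV {1..CARD('x)})"

definition q_expect :: "real \<Rightarrow> ('x::finite \<Rightarrow> 'y::finite \<Rightarrow> real) \<Rightarrow> ('x \<Rightarrow> 'y \<Rightarrow> real) \<Rightarrow> real" where
  "q_expect q P F = (\<Sum>x\<in>UNIV. \<Sum>y\<in>UNIV. F x y * P x y powr q) /
                     (\<Sum>x\<in>UNIV. \<Sum>y\<in>UNIV. P x y powr q)"

definition cond_prob :: "('x::finite \<Rightarrow> 'y \<Rightarrow> real) \<Rightarrow> 'x \<Rightarrow> 'y \<Rightarrow> real" where
  "cond_prob P x y = P x y / (\<Sum>x'\<in>UNIV. P x' y)"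

definition escort_cond :: "real \<Rightarrow> ('x::finite \<Rightarrow> 'y \<Rightarrow> real) \<Rightarrow> 'x \<Rightarrow> 'y \<Rightarrow> real" where
  "escort_cond q P x y = cond_prob P x y powr q / (\<Sum>x'\<in>UNIV. cond_prob P x' y powr q)"

definition escort_marg :: "real \<Rightarrow> ('x::finite \<Rightarrow> 'y::finite \<Rightarrow> real) \<Rightarrow> 'y \<Rightarrow> real" where
  "escort_marg q P y = (\<Sum>x\<in>UNIV. P x y powr q) / (\<Sum>x'\<in>UNIV. \<Sum>y'\<in>UNIV. P x' y' powr q)"

end

theory Submission
  imports Defs
begin

lemma per_y:
  fixes a :: "'x::finite \<Rightarrow> real" and g :: "'x \<Rightarrow> nat" and \<rho> :: real
  assumes apos: "\<And>x. a x > 0"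
    and bij: "bij_betw g UNIV {1..n}"
    and opt: "\<And>x x'. g x < g x' \<Longrightarrow> a x \<ge> a x'"
    and rho: "\<rho> > 0"
  shows "(\<Sum>x\<in>UNIV. real (g x) powr \<rho> * a x)
         \<le> (\<Sum>x\<in>UNIV. a x powr (1 / (1 + \<rho>))) powr (1 + \<rho>)"
proof -
  define r where "r = 1 / (1 + \<rho>)"
  define S where "S = (\<Sum>x\<in>UNIV. a x powr r)"
  have r0: "r > 0" using rho by (simp add: r_def)
  have Spos: "S > 0" unfolding S_def
    by (rule sum_pos) (use apos in \<open>auto simp: less_imp_neq[symmetric]\<close>)
  have inj: "inj g" using bij by (simp add: bij_betw_def)
  have rng: "range g = {1..n}" using bij by (simp add: bij_betw_def)
  have bound: "real (g x) \<le> S / a x powr r" for x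
  proof -
    define A where "A = {x'. g x' \<le> g x}"
    have img: "g ` A = {1..g x}"
    proof
      show "g ` A \<subseteq> {1..g x}"
      proof
        fix k assume "k \<in> g ` A"
        then obtain x' where "x' \<in> A" "k = g x'" by auto
        moreover have "g x' \<in> {1..n}" using rng by auto
        ultimately show "k \<in> {1..g x}" by (auto simp: A_def)
      qed
      show "{1..g x} \<subseteq> g ` A"
      proof
        fix k assume k: "k \<in> {1..g x}"
        have "g x \<in> {1..n}" using rng by auto
        with k have "k \<in> range g" using rng by auto
        then obtain x' where "k = g x'" by auto
        with k show "k \<in> g ` A" by (auto simp: A_def)
      qed
    qed
    have "card A = g x"
    proof -
      have "card A = card (g ` A)" using inj by (simp add: card_image inj_on_subset)
      also have "\<dots> = g x" using img by simp
      finally show ?thesis .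
    qed
    hence "real (g x) = (\<Sum>x'\<in>A. 1)" by simp
    also have "\<dots> \<le> (\<Sum>x'\<in>A. (a x' / a x) powr r)"
    proof (rule sum_mono)
      fix x' assume "x' \<in> A"
      hence "g x' < g x \<or> x' = x" using inj by (auto simp: A_def inj_eq order.order_iff_strict)
      hence "a x' \<ge> a x" using opt by auto
      hence "a x' / a x \<ge> 1" using apos[of x] by simp
      thus "1 \<le> (a x' / a x) powr r" using r0 by (simp add: ge_one_powr_ge_zero)
    qed
    also have "\<dots> \<le> (\<Sum>x'\<in>UNIV. (a x' / a x) powr r)"
      by (rule sum_mono2) auto
    also have "\<dots> = (\<Sum>x'\<in>UNIV. a x' powr r / a x powr r)"
      using apos by (simp add: powr_divide less_imp_le)
    also have "\<dots> = S / a x powr r" by (simp add: S_def sum_divide_distrib)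
    finally show ?thesis .
  qed
  have trm: "real (g x) powr \<rho> * a x \<le> S powr \<rho> * a x powr r" for x
  proof -
    have ax: "a x > 0" using apos by blast
    have "real (g x) powr \<rho> \<le> (S / a x powr r) powr \<rho>"
      using bound[of x] rho by (intro powr_mono2) auto
    also have "\<dots> = S powr \<rho> / a x powr (r * \<rho>)"
      using Spos ax by (simp add: powr_divide powr_powr)
    finally have "real (g x) powr \<rho> * a x \<le> S powr \<rho> / a x powr (r * \<rho>) * a x"
      by (intro mult_right_mono) (use ax in auto)
    also have "\<dots> = S powr \<rho> * (a x powr 1 / a x powr (r * \<rho>))"
      using ax by simp
    also have "a x powr 1 / a x powr (r * \<rho>) = a x powr (1 - r * \<rho>)"
      by (simp add: powr_diff)
    also have "1 - r * \<rho> = r" using rho by (simp add: r_def field_simps)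
    finally show ?thesis .
  qed
  have "(\<Sum>x\<in>UNIV. real (g x) powr \<rho> * a x) \<le> (\<Sum>x\<in>UNIV. S powr \<rho> * a x powr r)"
    by (rule sum_mono) (rule trm)
  also have "\<dots> = S powr \<rho> * S" by (simp add: S_def sum_distrib_left)
  also have "\<dots> = S powr (1 + \<rho>)" using Spos by (simp add: powr_add)
  finally show ?thesis by (simp add: S_def r_def)
qed

lemma ec_eq:
  fixes P :: "'x::finite \<Rightarrow> 'y \<Rightarrow> real"
  assumes pos: "\<And>x y. P x y > 0"
  shows "escort_cond q P x y = P x y powr q / (\<Sum>x'\<in>UNIV. P x' y powr q)"
proof -
  define m where "m = (\<Sum>x'\<in>UNIV. P x' y)"
  have m: "m > 0" unfolding m_def by (rule sum_pos) (auto simp: pos)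
  have cp: "cond_prob P x' y powr q = P x' y powr q / m powr q" for x'
    using pos[of x' y] m by (simp add: cond_prob_def m_def[symmetric] powr_divide less_imp_le)
  have "m powr q > 0" using m by simp
  thus ?thesis unfolding escort_cond_def cp
    by (simp add: sum_divide_distrib[symmetric])
qed

theorem theorem3:
  fixes P :: "'x::finite \<Rightarrow> 'y::finite \<Rightarrow> real"
    and G :: "'x \<Rightarrow> 'y \<Rightarrow> nat"
    and q \<rho> :: real
  assumes pos: "\<And>x y. P x y > 0"
    and sum1: "(\<Sum>x\<in>UNIV. \<Sum>y\<in>UNIV. P x y) = 1"
    and guess: "cond_guessing G"
    and opt: "\<And>y x x'. G x y < G x' y \<Longrightarrow> escort_cond q P x y \<ge> escort_cond q P x' y"
    and rho: "\<rho> > 0"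
  shows "(q_expect q P (\<lambda>x y. real (G x y) powr \<rho>)
           \<le> (\<Sum>y\<in>UNIV. escort_marg q P y *
                 (\<Sum>x\<in>UNIV. escort_cond q P x y powr (1 / (1 + \<rho>))) powr (1 + \<rho>))) \<and>
         ((\<Sum>y\<in>UNIV. escort_marg q P y *
                 (\<Sum>x\<in>UNIV. escort_cond q P x y powr (1 / (1 + \<rho>))) powr (1 + \<rho>))
         = (\<Sum>y\<in>UNIV. (\<Sum>x\<in>UNIV. P x y powr (q / (1 + \<rho>))) powr (1 + \<rho>))
           / (\<Sum>y\<in>UNIV. \<Sum>x\<in>UNIV. P x y powr q))"
proof
  define T where "T y = (\<Sum>x\<in>UNIV. P x y powr q)" for y
  define Z where "Z = (\<Sum>y\<in>UNIV. \<Sum>x\<in>UNIV. P x y powr q)"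
  have Tpos: "T y > 0" for y unfolding T_def by (rule sum_pos) (use pos in \<open>auto simp: less_imp_neq[symmetric]\<close>)
  have Zpos: "Z > 0" unfolding Z_def by (rule sum_pos) (use pos in \<open>auto simp: less_imp_neq[symmetric] intro!: sum_pos\<close>)
  have ec: "escort_cond q P x y = P x y powr q / T y" for x y
    using ec_eq[OF pos] by (simp add: T_def)
  have Zswap: "(\<Sum>x\<in>UNIV. \<Sum>y\<in>UNIV. P x y powr q) = Z"
    unfolding Z_def by (rule sum.swap)
  have em: "escort_marg q P y = T y / Z" for y
    unfolding escort_marg_def T_def Zswap by simp
  have Pq: "P x y powr q = T y * escort_cond q P x y" for x y
    using Tpos[of y] by (simp add: ec)
  have "q_expect q P (\<lambda>x y. real (G x y) powr \<rho>)
      = (\<Sum>y\<in>UNIV. \<Sum>x\<in>UNIV. real (G x y) powr \<rho> * P x y powr q) / Z"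
    unfolding q_expect_def Zswap by (subst sum.swap) simp
  also have "\<dots> = (\<Sum>y\<in>UNIV. T y / Z * (\<Sum>x\<in>UNIV. real (G x y) powr \<rho> * escort_cond q P x y))"
    by (simp add: Pq sum_divide_distrib sum_distrib_left mult_ac)
  also have "\<dots> \<le> (\<Sum>y\<in>UNIV. T y / Z *
                 (\<Sum>x\<in>UNIV. escort_cond q P x y powr (1 / (1 + \<rho>))) powr (1 + \<rho>))"
  proof (rule sum_mono, rule mult_left_mono)
    fix y
    show "0 \<le> T y / Z" using Tpos[of y] Zpos by simp
    have b: "bij_betw (\<lambda>x. G x y) UNIV {1..CARD('x)}" using guess by (simp add: cond_guessing_def)
    show "(\<Sum>x\<in>UNIV. real (G x y) powr \<rho> * escort_cond q P x y)
       \<le> (\<Sum>x\<in>UNIV. escort_cond q P x y powr (1 / (1 + \<rho>))) powr (1 + \<rho>)"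
    proof (rule per_y[OF _ b _ rho])
      fix x show "escort_cond q P x y > 0" using pos[of x y] Tpos[of y] by (simp add: ec)
    next
      fix x x' assume "G x y < G x' y" thus "escort_cond q P x' y \<le> escort_cond q P x y" by (rule opt)
    qed
  qed
  finally show "q_expect q P (\<lambda>x y. real (G x y) powr \<rho>)
           \<le> (\<Sum>y\<in>UNIV. escort_marg q P y *
                 (\<Sum>x\<in>UNIV. escort_cond q P x y powr (1 / (1 + \<rho>))) powr (1 + \<rho>))"
    by (simp add: em)
  have each: "escort_marg q P y *
                 (\<Sum>x\<in>UNIV. escort_cond q P x y powr (1 / (1 + \<rho>))) powr (1 + \<rho>)
        = (\<Sum>x\<in>UNIV. P x y powr (q / (1 + \<rho>))) powr (1 + \<rho>) / Z" for y
  proof -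
    have Ty: "T y > 0" by (rule Tpos)
    have "(\<Sum>x\<in>UNIV. escort_cond q P x y powr (1 / (1 + \<rho>)))
        = (\<Sum>x\<in>UNIV. P x y powr (q / (1 + \<rho>)) / T y powr (1 / (1 + \<rho>)))"
      by (rule sum.cong) (auto simp: ec powr_divide powr_powr less_imp_le pos Ty)
    also have "\<dots> = (\<Sum>x\<in>UNIV. P x y powr (q / (1 + \<rho>))) / T y powr (1 / (1 + \<rho>))"
      by (simp add: sum_divide_distrib)
    finally have s: "(\<Sum>x\<in>UNIV. escort_cond q P x y powr (1 / (1 + \<rho>))) powr (1 + \<rho>)
        = (\<Sum>x\<in>UNIV. P x y powr (q / (1 + \<rho>))) powr (1 + \<rho>) / T y"
      using Ty rho
      by (simp add: powr_divide powr_powr less_imp_le sum_nonneg)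
    show ?thesis using Ty Zpos by (simp add: s em)
  qed
  show "(\<Sum>y\<in>UNIV. escort_marg q P y *
                 (\<Sum>x\<in>UNIV. escort_cond q P x y powr (1 / (1 + \<rho>))) powr (1 + \<rho>))
         = (\<Sum>y\<in>UNIV. (\<Sum>x\<in>UNIV. P x y powr (q / (1 + \<rho>))) powr (1 + \<rho>))
           / (\<Sum>y\<in>UNIV. \<Sum>x\<in>UNIV. P x y powr q)"
    by (simp add: each sum_divide_distrib Z_def)
qed

end
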